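(* Let $F:\mathbb C^n\to\mathbb C^n$ be a square system of polynomials with real coefficients and let $I=(I_1,\dots,I_n)\in\mathbb{IC}^n$ be a strong interval approximate zero of $F$ for which there exist $x\in I$ and an invertible $Y\in\mathbb C^{n\times n}$ with $K_{x,Y}(I)\subset I$, $\sqrt2\,\lVert\mathbf 1_n-Y\cdot\square\mathrm JF(I)\rVert_\infty<1$ and $\{\bar z: z\in K_{x,Y}(I)\}\subset I$. If $\mathrm{Re}(I)>0$ (i.e., the real-part interval of every coordinate $I_k$ consists of positive numbers), then the unique zero of $F$ in $I$ is real and has all coordinates positive.
   Context: $\mathbb{IR}$ is the set of compact real intervals $[a,b]$, with operations $X\circ Y=\{x\circ y: x\in X,y\in Y\}$ for $\circ\in\{+,-,\cdot,/\}$ ($0\notin Y$ for division). $\mathbb{IC}=\{X+iY: X,Y\in\mathbb{IR}\}$ is the set of rectangular complex intervals, where $X+iY=\{x+iy:x\in X,y\in Y\}$ (so $\mathrm{Re}(X+iY)=X$), with operations defined for $I=X+iY$, $J=W+iZ$ by $I\pm J=(X\pm W)+i(Y\pm Z)$, $I\cdot J=(X W-YZ)+i(XZ+YW)$, $I/J=\frac{XW+YZ}{WW+ZZ}+i\frac{YW-XZ}{WW+ZZ}$. Operations on $\mathbb{IC}^n$ are componentwise; for an interval matrix $A=(A_{i,j})\in\mathbb{IC}^{n\times n}$ and $I\in\mathbb{IC}^n$, $A\cdot I:=\sum_{j=1}^n I_j\cdot(A_{1,j},\dots,A_{n,j})^T$. A point $x\in\mathbb C^n$ is identified with the degenerate interval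 vector $[\mathrm{Re}\,x,\mathrm{Re}\,x]+i[\mathrm{Im}\,x,\mathrm{Im}\,x]$. An interval enclosure of $F:\mathbb C^n\to\mathbb C^m$ is a map $\square F:\mathbb{IC}^n\to\mathbb{IC}^m$ with $\{F(x):x\in I\}\subseteq\square F(I)$ for all $I$; $\square F$ and $\square\mathrm JF$ denote fixed interval enclosures of $F$ and its Jacobian $\mathrm JF$. For $A\in\mathbb{IC}^{n\times n}$, $\lVert A\rVert_\infty:=\max_{B\in A}\max_{v\ne0}\lVert Bv\rVert_\infty/\lVert v\rVert_\infty$. The Krawczyk operator is $K_{x,Y}(I):=x-Y\cdot\square F(x)+(\mathbf 1_n-Y\cdot\square\mathrm JF(I))(I-x)$. $I$ is a strong interval approximate zero of $F$ if there exist $x\in I$ and invertible $Y$ with $K_{x,Y}(I)\subset I$ and $\sqrt2\,\lVert\mathbf 1_n-Y\cdot\square\mathrm JF(I)\rVert_\infty<1$; such an $I$ contains exactly one zero of $F$. *)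

theory Defs
  imports "HOL-Analysis.Analysis"
begin

type_synonym ir = "real set"

definition is_ir :: "real set \<Rightarrow> bool" where
  "is_ir X \<longleftrightarrow> (\<exists>a b. a \<le> b \<and> X = {a..b})"

definition ir_add :: "ir \<Rightarrow> ir \<Rightarrow> ir" where
  "ir_add X Y = {x + y | x y. x \<in> X \<and> y \<in> Y}"

definition ir_sub :: "ir \<Rightarrow> ir \<Rightarrow> ir" where
  "ir_sub X Y = {x - y | x y. x \<in> X \<and> y \<in> Y}"

definition ir_mul :: "ir \<Rightarrow> ir \<Rightarrow> ir" where
  "ir_mul X Y = {x * y | x y. x \<in> X \<and> y \<in> Y}"

definition ir_sum :: "('j \<Rightarrow> ir) \<Rightarrow> 'j set \<Rightarrow> ir" where
  "ir_sum X J = {(\<Sum>j\<in>J. x j) | x. \<forall>j\<in>J. x j \<in> X j}"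

type_synonym ic = "ir \<times> ir"

definition is_ic :: "ic \<Rightarrow> bool" where
  "is_ic I \<longleftrightarrow> is_ir (fst I) \<and> is_ir (snd I)"

definition ic_set :: "ic \<Rightarrow> complex set" where
  "ic_set I = {Complex x y | x y. x \<in> fst I \<and> y \<in> snd I}"

definition ic_pt :: "complex \<Rightarrow> ic" where
  "ic_pt z = ({Re z}, {Im z})"

definition ic_add :: "ic \<Rightarrow> ic \<Rightarrow> ic" where
  "ic_add I J = (ir_add (fst I) (fst J), ir_add (snd I) (snd J))"

definition ic_sub :: "ic \<Rightarrow> ic \<Rightarrow> ic" where
  "ic_sub I J = (ir_sub (fst I) (fst J), ir_sub (snd I) (snd J))"

definition ic_mul :: "ic \<Rightarrow> ic \<Rightarrow> ic" where
  "ic_mul I J = (ir_sub (ir_mul (fst I) (fst J)) (ir_mul (snd I) (snd J)),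
                 ir_add (ir_mul (fst I) (snd J)) (ir_mul (snd I) (fst J)))"

definition ic_sum :: "('j \<Rightarrow> ic) \<Rightarrow> 'j set \<Rightarrow> ic" where
  "ic_sum f J = (ir_sum (\<lambda>j. fst (f j)) J, ir_sum (\<lambda>j. snd (f j)) J)"

section \<open>Interval vectors ('n \<Rightarrow> ic) and interval matrices ('n \<Rightarrow> 'n \<Rightarrow> ic, row, column)\<close>

definition icvec_ok :: "('n \<Rightarrow> ic) \<Rightarrow> bool" where
  "icvec_ok I \<longleftrightarrow> (\<forall>k. is_ic (I k))"

definition icmat_ok :: "('n \<Rightarrow> 'm \<Rightarrow> ic) \<Rightarrow> bool" where
  "icmat_ok A \<longleftrightarrow> (\<forall>i j. is_ic (A i j))"

definition ibox :: "('n::finite \<Rightarrow> ic) \<Rightarrow> (complex^'n) set" where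
  "ibox I = {z. \<forall>k. z $ k \<in> ic_set (I k)}"

definition imat_members :: "('n::finite \<Rightarrow> 'n \<Rightarrow> ic) \<Rightarrow> (complex^'n^'n) set" where
  "imat_members A = {B. \<forall>i j. B $ i $ j \<in> ic_set (A i j)}"

definition pt_vec :: "complex^'n \<Rightarrow> ('n::finite \<Rightarrow> ic)" where
  "pt_vec x = (\<lambda>k. ic_pt (x $ k))"

definition pt_mat :: "complex^'n^'n \<Rightarrow> ('n::finite \<Rightarrow> 'n \<Rightarrow> ic)" where
  "pt_mat Y = (\<lambda>i j. ic_pt (Y $ i $ j))"

definition vec_add :: "('n \<Rightarrow> ic) \<Rightarrow> ('n \<Rightarrow> ic) \<Rightarrow> ('n \<Rightarrow> ic)" where
  "vec_add I J = (\<lambda>k. ic_add (I k) (J k))"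

definition vec_sub :: "('n \<Rightarrow> ic) \<Rightarrow> ('n \<Rightarrow> ic) \<Rightarrow> ('n \<Rightarrow> ic)" where
  "vec_sub I J = (\<lambda>k. ic_sub (I k) (J k))"

definition mat_sub :: "('n \<Rightarrow> 'n \<Rightarrow> ic) \<Rightarrow> ('n \<Rightarrow> 'n \<Rightarrow> ic) \<Rightarrow> ('n \<Rightarrow> 'n \<Rightarrow> ic)" where
  "mat_sub A B = (\<lambda>i j. ic_sub (A i j) (B i j))"

definition mat_vec :: "('n::finite \<Rightarrow> 'n \<Rightarrow> ic) \<Rightarrow> ('n \<Rightarrow> ic) \<Rightarrow> ('n \<Rightarrow> ic)" where
  "mat_vec A I = (\<lambda>i. ic_sum (\<lambda>j. ic_mul (I j) (A i j)) UNIV)"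

definition mat_mat :: "('n::finite \<Rightarrow> 'n \<Rightarrow> ic) \<Rightarrow> ('n \<Rightarrow> 'n \<Rightarrow> ic) \<Rightarrow> ('n \<Rightarrow> 'n \<Rightarrow> ic)" where
  "mat_mat A B = (\<lambda>i k. mat_vec A (\<lambda>j. B j k) i)"

definition real_poly_system :: "(complex^'n \<Rightarrow> complex^'n) \<Rightarrow> bool" where
  "real_poly_system F \<longleftrightarrow>
     (\<forall>i. \<exists>(A :: ('n \<Rightarrow> nat) set) (c :: ('n \<Rightarrow> nat) \<Rightarrow> real). finite A \<and>
        (\<forall>z. F z $ i = (\<Sum>\<alpha>\<in>A. of_real (c \<alpha>) * (\<Prod>k\<in>UNIV. (z $ k) ^ (\<alpha> k)))))"

definition jac :: "(complex^'n \<Rightarrow> complex^'n) \<Rightarrow> complex^'n \<Rightarrow> complex^'n^'n" where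
  "jac F z = (\<chi> i j. deriv (\<lambda>t. F (\<chi> k. if k = j then t else z $ k) $ i) (z $ j))"

definition is_enclosure_F :: "(complex^'n \<Rightarrow> complex^'n) \<Rightarrow> (('n \<Rightarrow> ic) \<Rightarrow> ('n \<Rightarrow> ic)) \<Rightarrow> bool" where
  "is_enclosure_F F FI \<longleftrightarrow>
     (\<forall>I. icvec_ok I \<longrightarrow> icvec_ok (FI I) \<and> F ` ibox I \<subseteq> ibox (FI I))"

definition is_enclosure_JF :: "(complex^'n \<Rightarrow> complex^'n) \<Rightarrow> (('n \<Rightarrow> ic) \<Rightarrow> ('n \<Rightarrow> 'n \<Rightarrow> ic)) \<Rightarrow> bool" where
  "is_enclosure_JF F JI \<longleftrightarrow>
     (\<forall>I. icvec_ok I \<longrightarrow> icmat_ok (JI I) \<and> jac F ` ibox I \<subseteq> imat_members (JI I))"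

definition vnorm_inf :: "complex^'n::finite \<Rightarrow> real" where
  "vnorm_inf v = Max (range (\<lambda>k. cmod (v $ k)))"

definition imat_norm :: "('n::finite \<Rightarrow> 'n \<Rightarrow> ic) \<Rightarrow> real" where
  "imat_norm A = Sup {vnorm_inf (B *v v) / vnorm_inf v | B v. B \<in> imat_members A \<and> v \<noteq> 0}"

definition kmat :: "(('n::finite \<Rightarrow> ic) \<Rightarrow> ('n \<Rightarrow> 'n \<Rightarrow> ic)) \<Rightarrow> complex^'n^'n \<Rightarrow> ('n \<Rightarrow> ic) \<Rightarrow> ('n \<Rightarrow> 'n \<Rightarrow> ic)" where
  "kmat JI Y I = mat_sub (pt_mat (mat 1)) (mat_mat (pt_mat Y) (JI I))"

definition krawczyk :: "(('n::finite \<Rightarrow> ic) \<Rightarrow> ('n \<Rightarrow> ic)) \<Rightarrow> (('n \<Rightarrow> ic) \<Rightarrow> ('n \<Rightarrow> 'n \<Rightarrow> ic))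
    \<Rightarrow> complex^'n \<Rightarrow> complex^'n^'n \<Rightarrow> ('n \<Rightarrow> ic) \<Rightarrow> ('n \<Rightarrow> ic)" where
  "krawczyk FI JI x Y I =
     vec_add (vec_sub (pt_vec x) (mat_vec (pt_mat Y) (FI (pt_vec x))))
             (mat_vec (kmat JI Y I) (vec_sub I (pt_vec x)))"

definition strong_iaz :: "(('n::finite \<Rightarrow> ic) \<Rightarrow> ('n \<Rightarrow> ic)) \<Rightarrow> (('n \<Rightarrow> ic) \<Rightarrow> ('n \<Rightarrow> 'n \<Rightarrow> ic))
    \<Rightarrow> ('n \<Rightarrow> ic) \<Rightarrow> bool" where
  "strong_iaz FI JI I \<longleftrightarrow>
     (\<exists>x Y. x \<in> ibox I \<and> invertible Y \<and> ibox (krawczyk FI JI x Y I) \<subseteq> ibox I \<and>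
            sqrt 2 * imat_norm (kmat JI Y I) < 1)"

definition vcnj :: "complex^'n \<Rightarrow> complex^'n" where
  "vcnj z = (\<chi> k. cnj (z $ k))"

end

theory Submission
  imports Defs
begin

lemma ic_set_iff: "z \<in> ic_set I \<longleftrightarrow> Re z \<in> fst I \<and> Im z \<in> snd I"
  unfolding ic_set_def by (cases z) auto

lemma ir_addI: "a \<in> X \<Longrightarrow> b \<in> Y \<Longrightarrow> a + b \<in> ir_add X Y"
  unfolding ir_add_def by blast
lemma ir_subI: "a \<in> X \<Longrightarrow> b \<in> Y \<Longrightarrow> a - b \<in> ir_sub X Y"
  unfolding ir_sub_def by blast
lemma ir_mulI: "a \<in> X \<Longrightarrow> b \<in> Y \<Longrightarrow> a * b \<in> ir_mul X Y"
  unfolding ir_mul_def by blast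
lemma ir_sumI: "(\<And>j. j \<in> J \<Longrightarrow> x j \<in> X j) \<Longrightarrow> (\<Sum>j\<in>J. x j) \<in> ir_sum X J"
  unfolding ir_sum_def by blast

lemma ic_mulI: "a \<in> ic_set A \<Longrightarrow> b \<in> ic_set B \<Longrightarrow> a * b \<in> ic_set (ic_mul A B)"
  unfolding ic_set_iff ic_mul_def by (auto intro!: ir_subI ir_addI ir_mulI)
lemma ic_addI: "a \<in> ic_set A \<Longrightarrow> b \<in> ic_set B \<Longrightarrow> a + b \<in> ic_set (ic_add A B)"
  unfolding ic_set_iff ic_add_def by (auto intro!: ir_subI ir_addI ir_mulI)
lemma ic_subI: "a \<in> ic_set A \<Longrightarrow> b \<in> ic_set B \<Longrightarrow> a - b \<in> ic_set (ic_sub A B)"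
  unfolding ic_set_iff ic_sub_def by (auto intro!: ir_subI ir_addI ir_mulI)
lemma ic_sumI: "(\<And>j. j \<in> J \<Longrightarrow> x j \<in> ic_set (X j)) \<Longrightarrow> (\<Sum>j\<in>J. x j) \<in> ic_set (ic_sum X J)"
  unfolding ic_set_iff ic_sum_def by (auto simp: Re_sum Im_sum intro!: ir_sumI)
lemma ic_ptI: "z \<in> ic_set (ic_pt z)"
  unfolding ic_set_iff ic_pt_def by auto

lemma mat_vecI:
  assumes "\<And>i j. B $ i $ j \<in> ic_set (A i j)" "\<And>j. v $ j \<in> ic_set (J j)"
  shows "(B *v v) $ i \<in> ic_set (mat_vec A J i)"
proof -
  have "(B *v v) $ i = (\<Sum>j\<in>UNIV. v $ j * B $ i $ j)"
    by (simp add: matrix_vector_mult_def mult.commute)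
  then show ?thesis unfolding mat_vec_def
    by (auto intro!: ic_sumI ic_mulI assms)
qed

definition line :: "complex^'n \<Rightarrow> complex^'n \<Rightarrow> complex \<Rightarrow> complex^'n" where
  "line p d s = (\<chi> k. p $ k + s * d $ k)"

definition PD :: "(complex^'n::finite \<Rightarrow> complex) \<Rightarrow> bool" where
  "PD f \<longleftrightarrow> (\<forall>q. \<exists>g. (\<forall>j. ((\<lambda>t. f (\<chi> k. if k = j then t else q $ k)) has_field_derivative g j) (at (q $ j)))
     \<and> (\<forall>p d s. line p d s = q \<longrightarrow> ((\<lambda>s. f (line p d s)) has_field_derivative (\<Sum>k\<in>UNIV. g k * d $ k)) (at s)))"

lemma upd_same: "(\<chi> k. if k = j then q $ j else q $ k) = q"
  by (simp add: vec_eq_iff)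

lemma PD_const: "PD (\<lambda>z. c)"
  unfolding PD_def by (intro allI exI[of _ "\<lambda>_. 0"]) auto

lemma PD_coord: fixes i :: "'n::finite" shows "PD (\<lambda>z::complex^'n. z $ i)"
  unfolding PD_def
proof (intro allI exI[of _ "\<lambda>j. if j = i then 1 else 0"] conjI)
  fix q j
  show "((\<lambda>t. (\<chi> k. if k = j then t else q $ k) $ i) has_field_derivative (if j = i then 1 else 0)) (at (q $ j))"
    by (cases "j = i") (auto intro!: derivative_eq_intros)
next
  fix q p d :: "complex^'n" and s :: complex
  have e: "(\<Sum>k\<in>UNIV. (if k = i then 1 else 0) * d $ k) = d $ i"
  proof -
    have "(\<Sum>k\<in>UNIV. (if k = i then 1 else 0) * d $ k) = (\<Sum>k\<in>UNIV. if k = i then d $ k else 0)"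
      by (rule sum.cong) auto
    then show ?thesis by simp
  qed
  show "line p d s = q \<longrightarrow> ((\<lambda>s. line p d s $ i) has_field_derivative (\<Sum>k\<in>UNIV. (if k = i then 1 else 0) * d $ k)) (at s)"
    unfolding e by (auto simp: line_def intro!: derivative_eq_intros)
qed

lemma PD_mult: assumes "PD f" "PD h" shows "PD (\<lambda>z. f z * h z)"
  unfolding PD_def
proof
  fix q
  from assms(1) obtain g1 where g1: "\<forall>j. ((\<lambda>t. f (\<chi> k. if k = j then t else q $ k)) has_field_derivative g1 j) (at (q $ j))"
     "\<forall>p d s. line p d s = q \<longrightarrow> ((\<lambda>s. f (line p d s)) has_field_derivative (\<Sum>k\<in>UNIV. g1 k * d $ k)) (at s)"
    unfolding PD_def by blast
  from assms(2) obtain g2 where g2: "\<forall>j. ((\<lambda>t. h (\<chi> k. if k = j then t else q $ k)) has_field_derivative g2 j) (at (q $ j))"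
     "\<forall>p d s. line p d s = q \<longrightarrow> ((\<lambda>s. h (line p d s)) has_field_derivative (\<Sum>k\<in>UNIV. g2 k * d $ k)) (at s)"
    unfolding PD_def by blast
  show "\<exists>g. (\<forall>j. ((\<lambda>t. f (\<chi> k. if k = j then t else q $ k) * h (\<chi> k. if k = j then t else q $ k)) has_field_derivative g j) (at (q $ j)))
     \<and> (\<forall>p d s. line p d s = q \<longrightarrow> ((\<lambda>s. f (line p d s) * h (line p d s)) has_field_derivative (\<Sum>k\<in>UNIV. g k * d $ k)) (at s))"
  proof (intro exI[of _ "\<lambda>j. g1 j * h q + g2 j * f q"] conjI allI impI)
    fix j
    show "((\<lambda>t. f (\<chi> k. if k = j then t else q $ k) * h (\<chi> k. if k = j then t else q $ k)) has_field_derivative g1 j * h q + g2 j * f q) (at (q $ j))"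
      using DERIV_mult[OF g1(1)[rule_format, of j] g2(1)[rule_format, of j]] by (simp add: upd_same)
  next
    fix p d s assume "line p d s = q"
    then show "((\<lambda>s. f (line p d s) * h (line p d s)) has_field_derivative (\<Sum>k\<in>UNIV. (g1 k * h q + g2 k * f q) * d $ k)) (at s)"
      using DERIV_mult[OF g1(2)[rule_format, of p d s] g2(2)[rule_format, of p d s]]
      by (simp add: algebra_simps sum_distrib_left sum_distrib_right sum.distrib)
  qed
qed

lemma PD_add: assumes "PD f" "PD h" shows "PD (\<lambda>z. f z + h z)"
  unfolding PD_def
proof
  fix q
  from assms(1) obtain g1 where g1: "\<forall>j. ((\<lambda>t. f (\<chi> k. if k = j then t else q $ k)) has_field_derivative g1 j) (at (q $ j))"
     "\<forall>p d s. line p d s = q \<longrightarrow> ((\<lambda>s. f (line p d s)) has_field_derivative (\<Sum>k\<in>UNIV. g1 k * d $ k)) (at s)"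
    unfolding PD_def by blast
  from assms(2) obtain g2 where g2: "\<forall>j. ((\<lambda>t. h (\<chi> k. if k = j then t else q $ k)) has_field_derivative g2 j) (at (q $ j))"
     "\<forall>p d s. line p d s = q \<longrightarrow> ((\<lambda>s. h (line p d s)) has_field_derivative (\<Sum>k\<in>UNIV. g2 k * d $ k)) (at s)"
    unfolding PD_def by blast
  show "\<exists>g. (\<forall>j. ((\<lambda>t. f (\<chi> k. if k = j then t else q $ k) + h (\<chi> k. if k = j then t else q $ k)) has_field_derivative g j) (at (q $ j)))
     \<and> (\<forall>p d s. line p d s = q \<longrightarrow> ((\<lambda>s. f (line p d s) + h (line p d s)) has_field_derivative (\<Sum>k\<in>UNIV. g k * d $ k)) (at s))"
  proof (intro exI[of _ "\<lambda>j. g1 j + g2 j"] conjI allI impI)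
    fix j
    show "((\<lambda>t. f (\<chi> k. if k = j then t else q $ k) + h (\<chi> k. if k = j then t else q $ k)) has_field_derivative g1 j + g2 j) (at (q $ j))"
      using DERIV_add[OF g1(1)[rule_format, of j] g2(1)[rule_format, of j]] by simp
  next
    fix p d s assume "line p d s = q"
    then show "((\<lambda>s. f (line p d s) + h (line p d s)) has_field_derivative (\<Sum>k\<in>UNIV. (g1 k + g2 k) * d $ k)) (at s)"
      using DERIV_add[OF g1(2)[rule_format, of p d s] g2(2)[rule_format, of p d s]]
      by (simp add: algebra_simps sum.distrib)
  qed
qed

lemma PD_sum: "finite A \<Longrightarrow> (\<And>a. a \<in> A \<Longrightarrow> PD (f a)) \<Longrightarrow> PD (\<lambda>z. \<Sum>a\<in>A. f a z)"
  by (induction A rule: finite_induct) (auto intro: PD_const PD_add)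

lemma PD_prod: "finite A \<Longrightarrow> (\<And>a. a \<in> A \<Longrightarrow> PD (f a)) \<Longrightarrow> PD (\<lambda>z. \<Prod>a\<in>A. f a z)"
  by (induction A rule: finite_induct) (auto intro: PD_const PD_mult)

lemma PD_power: "PD f \<Longrightarrow> PD (\<lambda>z. f z ^ n)"
  by (induction n) (auto intro: PD_const PD_mult)

lemma PD_poly: "PD (\<lambda>z. (\<Sum>\<alpha>\<in>A. of_real (c \<alpha>) * (\<Prod>k\<in>UNIV. (z $ k) ^ (\<alpha> k))))"
proof (cases "finite A")
  case True
  then show ?thesis
    by (intro PD_sum PD_mult PD_const PD_prod PD_power PD_coord) auto
next
  case False
  then show ?thesis by (simp add: PD_const)
qed

lemma line_deriv:
  assumes "real_poly_system F"
  shows "((\<lambda>s. F (line p d s) $ i) has_field_derivative (\<Sum>k\<in>UNIV. jac F (line p d s) $ i $ k * d $ k)) (at s)"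
proof -
  from assms obtain A c where eq: "\<forall>z. F z $ i = (\<Sum>\<alpha>\<in>A. of_real (c \<alpha>) * (\<Prod>k\<in>UNIV. (z $ k) ^ (\<alpha> k)))"
    unfolding real_poly_system_def by blast
  have "PD (\<lambda>z. F z $ i)" using PD_poly[where A=A and c=c] eq by simp
  then obtain g where g: "\<forall>j. ((\<lambda>t. F (\<chi> k. if k = j then t else line p d s $ k) $ i) has_field_derivative g j) (at (line p d s $ j))"
     "((\<lambda>s. F (line p d s) $ i) has_field_derivative (\<Sum>k\<in>UNIV. g k * d $ k)) (at s)"
    unfolding PD_def by blast
  have "jac F (line p d s) $ i $ k = g k" for k
    unfolding jac_def using DERIV_imp_deriv[OF g(1)[rule_format, of k]] by simp
  then show ?thesis using g(2) by simp
qed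

lemma ibox_iff: "z \<in> ibox I \<longleftrightarrow> (\<forall>k. Re (z $ k) \<in> fst (I k) \<and> Im (z $ k) \<in> snd (I k))"
  unfolding ibox_def ic_set_iff by simp

lemma is_ir_convex: "is_ir X \<Longrightarrow> a \<in> X \<Longrightarrow> b \<in> X \<Longrightarrow> 0 \<le> t \<Longrightarrow> t \<le> 1 \<Longrightarrow> a + t * (b - a) \<in> X"
proof -
  assume "is_ir X" "a \<in> X" "b \<in> X" "0 \<le> t" "t \<le> 1"
  then obtain u v where X: "X = {u..v}" unfolding is_ir_def by blast
  have "a + t * (b - a) = (1 - t) * a + t * b" by (simp add: algebra_simps)
  moreover have "u \<le> (1 - t) * a + t * b"
  proof -
    have "(1 - t) * u \<le> (1 - t) * a" "t * u \<le> t * b"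
      using \<open>a \<in> X\<close> \<open>b \<in> X\<close> \<open>0 \<le> t\<close> \<open>t \<le> 1\<close> X by (auto intro!: mult_left_mono)
    then show ?thesis by (simp add: algebra_simps)
  qed
  moreover have "(1 - t) * a + t * b \<le> v"
  proof -
    have "(1 - t) * a \<le> (1 - t) * v" "t * b \<le> t * v"
      using \<open>a \<in> X\<close> \<open>b \<in> X\<close> \<open>0 \<le> t\<close> \<open>t \<le> 1\<close> X by (auto intro!: mult_left_mono)
    then show ?thesis by (simp add: algebra_simps)
  qed
  ultimately show ?thesis using X by simp
qed

lemma line_in_box:
  assumes "icvec_ok I" "p \<in> ibox I" "z \<in> ibox I" "0 \<le> t" "t \<le> 1"
  shows "line p (z - p) (of_real t) \<in> ibox I"
  unfolding ibox_iff
proof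
  fix k
  have ok: "is_ir (fst (I k))" "is_ir (snd (I k))" using assms(1) unfolding icvec_ok_def is_ic_def by auto
  have "Re (line p (z - p) (of_real t) $ k) = Re (p $ k) + t * (Re (z $ k) - Re (p $ k))"
       "Im (line p (z - p) (of_real t) $ k) = Im (p $ k) + t * (Im (z $ k) - Im (p $ k))"
    by (simp_all add: line_def)
  then show "Re (line p (z - p) (of_real t) $ k) \<in> fst (I k) \<and> Im (line p (z - p) (of_real t) $ k) \<in> snd (I k)"
    using is_ir_convex[OF ok(1)] is_ir_convex[OF ok(2)] assms(2-5) unfolding ibox_iff by auto
qed

lemma line_0: "line p d 0 = p" by (simp add: line_def vec_eq_iff)
lemma line_1: "line p (z - p) 1 = z" by (simp add: line_def vec_eq_iff)

lemma mvt_Re: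
  assumes "real_poly_system F" "icvec_ok I" "p \<in> ibox I" "z \<in> ibox I"
  shows "\<exists>\<xi>\<in>ibox I. Re (F z $ l - F p $ l) = Re (\<Sum>k\<in>UNIV. jac F \<xi> $ l $ k * (z - p) $ k)"
proof -
  let ?d = "z - p"
  let ?D = "\<lambda>t::real. Re (\<Sum>k\<in>UNIV. jac F (line p ?d (of_real t)) $ l $ k * ?d $ k)"
  have "DERIV (\<lambda>t. Re (F (line p ?d (of_real t)) $ l)) t :> ?D t" for t
    by (intro has_field_derivative_Re has_vector_derivative_real_field line_deriv assms(1))
  from MVT2[of 0 1, OF _ this] obtain \<tau> where "0 < \<tau>" "\<tau> < 1"
    "Re (F (line p ?d (of_real 1)) $ l) - Re (F (line p ?d (of_real 0)) $ l) = (1 - 0) * ?D \<tau>"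
    by auto
  then show ?thesis using line_in_box[OF assms(2-4), of \<tau>]
    by (intro bexI[of _ "line p ?d (of_real \<tau>)"]) (auto simp: line_0 line_1)
qed

lemma mvt_Im:
  assumes "real_poly_system F" "icvec_ok I" "p \<in> ibox I" "z \<in> ibox I"
  shows "\<exists>\<xi>\<in>ibox I. Im (F z $ l - F p $ l) = Im (\<Sum>k\<in>UNIV. jac F \<xi> $ l $ k * (z - p) $ k)"
proof -
  let ?d = "z - p"
  let ?D = "\<lambda>t::real. Im (\<Sum>k\<in>UNIV. jac F (line p ?d (of_real t)) $ l $ k * ?d $ k)"
  have "DERIV (\<lambda>t. Im (F (line p ?d (of_real t)) $ l)) t :> ?D t" for t
    by (intro has_field_derivative_Im has_vector_derivative_real_field line_deriv assms(1))
  from MVT2[of 0 1, OF _ this] obtain \<tau> where "0 < \<tau>" "\<tau> < 1"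
    "Im (F (line p ?d (of_real 1)) $ l) - Im (F (line p ?d (of_real 0)) $ l) = (1 - 0) * ?D \<tau>"
    by auto
  then show ?thesis using line_in_box[OF assms(2-4), of \<tau>]
    by (intro bexI[of _ "line p ?d (of_real \<tau>)"]) (auto simp: line_0 line_1)
qed

definition CC :: "complex^'n^'n \<Rightarrow> complex^'n^'n \<Rightarrow> complex^'n^'n \<Rightarrow> 'n::finite \<Rightarrow> 'n \<Rightarrow> real" where
  "CC Y P Q i k = Re (mat 1 $ i $ k) - (\<Sum>l\<in>UNIV. Re (P$l$k) * Re (Y$i$l) - Im (Q$l$k) * Im (Y$i$l))"
definition SS :: "complex^'n^'n \<Rightarrow> complex^'n^'n \<Rightarrow> complex^'n^'n \<Rightarrow> 'n::finite \<Rightarrow> 'n \<Rightarrow> real" where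
  "SS Y P Q i k = Im (mat 1 $ i $ k) - (\<Sum>l\<in>UNIV. Re (P$l$k) * Im (Y$i$l) + Im (Q$l$k) * Re (Y$i$l))"

lemma members_iff: "B \<in> imat_members A \<longleftrightarrow> (\<forall>i j. Re (B$i$j) \<in> fst (A i j) \<and> Im (B$i$j) \<in> snd (A i j))"
  unfolding imat_members_def ic_set_iff by simp

lemma CC_mem:
  assumes "P \<in> imat_members (JI I)" "Q \<in> imat_members (JI I)"
  shows "CC Y P Q i k \<in> fst (kmat JI Y I i k)"
proof -
  have "fst (kmat JI Y I i k) = ir_sub {Re (mat 1 $ i $ k)}
     (ir_sum (\<lambda>j. ir_sub (ir_mul (fst (JI I j k)) {Re (Y$i$j)}) (ir_mul (snd (JI I j k)) {Im (Y$i$j)})) UNIV)"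
    unfolding kmat_def mat_sub_def ic_sub_def mat_mat_def mat_vec_def ic_sum_def ic_mul_def pt_mat_def ic_pt_def
    by simp
  moreover have "Re (P$j$k) \<in> fst (JI I j k)" "Im (Q$j$k) \<in> snd (JI I j k)" for j
    using assms unfolding members_iff by blast+
  ultimately show ?thesis unfolding CC_def
    by (auto intro!: ir_subI ir_sumI ir_mulI)
qed

lemma SS_mem:
  assumes "P \<in> imat_members (JI I)" "Q \<in> imat_members (JI I)"
  shows "SS Y P Q i k \<in> snd (kmat JI Y I i k)"
proof -
  have "snd (kmat JI Y I i k) = ir_sub {Im (mat 1 $ i $ k)}
     (ir_sum (\<lambda>j. ir_add (ir_mul (fst (JI I j k)) {Im (Y$i$j)}) (ir_mul (snd (JI I j k)) {Re (Y$i$j)})) UNIV)"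
    unfolding kmat_def mat_sub_def ic_sub_def mat_mat_def mat_vec_def ic_sum_def ic_mul_def pt_mat_def ic_pt_def
    by simp
  moreover have "Re (P$j$k) \<in> fst (JI I j k)" "Im (Q$j$k) \<in> snd (JI I j k)" for j
    using assms unfolding members_iff by blast+
  ultimately show ?thesis unfolding SS_def
    by (auto intro!: ir_subI ir_sumI ir_mulI ir_addI)
qed

lemma sum_delta_mat: "(\<Sum>k\<in>UNIV. f k * Re (mat 1 $ i $ k)) = f i" "(\<Sum>k\<in>UNIV. f k * Im (mat 1 $ i $ k)) = 0"
  for f :: "'n::finite \<Rightarrow> real"
proof -
  have "(\<Sum>k\<in>UNIV. f k * Re (mat 1 $ i $ k)) = (\<Sum>k\<in>UNIV. if k = i then f k else 0)"
    by (rule sum.cong) (auto simp: mat_def)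
  then show "(\<Sum>k\<in>UNIV. f k * Re (mat 1 $ i $ k)) = f i" by simp
  show "(\<Sum>k\<in>UNIV. f k * Im (mat 1 $ i $ k)) = 0" by (auto simp: mat_def intro!: sum.neutral)
qed

lemma ring1: "(a::real) * (c - s1) - b * (e - s2) = a * c - b * e - (a * s1 - b * s2)" by algebra
lemma ring2: "(a::real) * (c - s1) + b * (e - s2) = a * c + b * e - (a * s1 + b * s2)" by algebra

lemma ident_Re:
  fixes Y P Q :: "complex^'n::finite^'n" and d DF :: "complex^'n"
  assumes "\<And>l. Re (DF$l) = Re (\<Sum>k\<in>UNIV. P$l$k * d$k)" "\<And>l. Im (DF$l) = Im (\<Sum>k\<in>UNIV. Q$l$k * d$k)"
  shows "Re (d$i - (Y *v DF)$i) = (\<Sum>k\<in>UNIV. Re (d$k) * CC Y P Q i k - Im (d$k) * SS Y Q P i k)"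
proof -
  let ?T = "\<lambda>l k. Re (Y$i$l) * (Re (P$l$k) * Re (d$k) - Im (P$l$k) * Im (d$k))
                 - Im (Y$i$l) * (Re (Q$l$k) * Im (d$k) + Im (Q$l$k) * Re (d$k))"
  have "Re ((Y *v DF)$i) = (\<Sum>l\<in>UNIV. Re (Y$i$l) * Re (DF$l) - Im (Y$i$l) * Im (DF$l))"
    by (simp add: matrix_vector_mult_def Re_sum)
  also have "\<dots> = (\<Sum>l\<in>UNIV. Re (Y$i$l) * (\<Sum>k\<in>UNIV. Re (P$l$k) * Re (d$k) - Im (P$l$k) * Im (d$k))
        - Im (Y$i$l) * (\<Sum>k\<in>UNIV. Re (Q$l$k) * Im (d$k) + Im (Q$l$k) * Re (d$k)))"
    by (simp add: assms Re_sum Im_sum)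
  also have "\<dots> = (\<Sum>l\<in>UNIV. \<Sum>k\<in>UNIV. ?T l k)"
    by (simp only: sum_distrib_left sum_subtractf[symmetric])
  finally have L: "Re ((Y *v DF)$i) = (\<Sum>l\<in>UNIV. \<Sum>k\<in>UNIV. ?T l k)" .
  have "(\<Sum>k\<in>UNIV. Re (d$k) * CC Y P Q i k - Im (d$k) * SS Y Q P i k)
      = (\<Sum>k\<in>UNIV. Re (d$k) * Re (mat 1 $ i $ k) - Im (d$k) * Im (mat 1 $ i $ k) - (\<Sum>l\<in>UNIV. ?T l k))"
  proof (rule sum.cong[OF refl])
    fix k
    have "Re (d$k) * (\<Sum>l\<in>UNIV. Re (P$l$k) * Re (Y$i$l) - Im (Q$l$k) * Im (Y$i$l))
        - Im (d$k) * (\<Sum>l\<in>UNIV. Re (Q$l$k) * Im (Y$i$l) + Im (P$l$k) * Re (Y$i$l))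
        = (\<Sum>l\<in>UNIV. Re (d$k) * (Re (P$l$k) * Re (Y$i$l) - Im (Q$l$k) * Im (Y$i$l))
        - Im (d$k) * (Re (Q$l$k) * Im (Y$i$l) + Im (P$l$k) * Re (Y$i$l)))"
      by (simp only: sum_distrib_left sum_subtractf[symmetric])
    also have "\<dots> = (\<Sum>l\<in>UNIV. ?T l k)"
      by (rule sum.cong[OF refl]) algebra
    finally show "Re (d$k) * CC Y P Q i k - Im (d$k) * SS Y Q P i k
      = Re (d$k) * Re (mat 1 $ i $ k) - Im (d$k) * Im (mat 1 $ i $ k) - (\<Sum>l\<in>UNIV. ?T l k)"
      unfolding CC_def SS_def ring1 by simp
  qed
  also have "\<dots> = Re (d$i) - 0 - (\<Sum>k\<in>UNIV. \<Sum>l\<in>UNIV. ?T l k)"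
    by (simp only: sum_subtractf sum_delta_mat)
  also have "\<dots> = Re (d$i) - (\<Sum>l\<in>UNIV. \<Sum>k\<in>UNIV. ?T l k)"
    unfolding sum.swap[of ?T UNIV UNIV] by simp
  finally show ?thesis using L by simp
qed

lemma ident_Im:
  fixes Y P Q :: "complex^'n::finite^'n" and d DF :: "complex^'n"
  assumes "\<And>l. Re (DF$l) = Re (\<Sum>k\<in>UNIV. P$l$k * d$k)" "\<And>l. Im (DF$l) = Im (\<Sum>k\<in>UNIV. Q$l$k * d$k)"
  shows "Im (d$i - (Y *v DF)$i) = (\<Sum>k\<in>UNIV. Re (d$k) * SS Y P Q i k + Im (d$k) * CC Y Q P i k)"
proof -
  let ?T = "\<lambda>l k. Re (Y$i$l) * (Re (Q$l$k) * Im (d$k) + Im (Q$l$k) * Re (d$k))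
                 + Im (Y$i$l) * (Re (P$l$k) * Re (d$k) - Im (P$l$k) * Im (d$k))"
  have "Im ((Y *v DF)$i) = (\<Sum>l\<in>UNIV. Re (Y$i$l) * Im (DF$l) + Im (Y$i$l) * Re (DF$l))"
    by (simp add: matrix_vector_mult_def Im_sum)
  also have "\<dots> = (\<Sum>l\<in>UNIV. Re (Y$i$l) * (\<Sum>k\<in>UNIV. Re (Q$l$k) * Im (d$k) + Im (Q$l$k) * Re (d$k))
        + Im (Y$i$l) * (\<Sum>k\<in>UNIV. Re (P$l$k) * Re (d$k) - Im (P$l$k) * Im (d$k)))"
    by (simp add: assms Re_sum Im_sum)
  also have "\<dots> = (\<Sum>l\<in>UNIV. \<Sum>k\<in>UNIV. ?T l k)"
    by (simp only: sum_distrib_left sum.distrib[symmetric])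
  finally have L: "Im ((Y *v DF)$i) = (\<Sum>l\<in>UNIV. \<Sum>k\<in>UNIV. ?T l k)" .
  have "(\<Sum>k\<in>UNIV. Re (d$k) * SS Y P Q i k + Im (d$k) * CC Y Q P i k)
      = (\<Sum>k\<in>UNIV. Re (d$k) * Im (mat 1 $ i $ k) + Im (d$k) * Re (mat 1 $ i $ k) - (\<Sum>l\<in>UNIV. ?T l k))"
  proof (rule sum.cong[OF refl])
    fix k
    have "Re (d$k) * (\<Sum>l\<in>UNIV. Re (P$l$k) * Im (Y$i$l) + Im (Q$l$k) * Re (Y$i$l))
        + Im (d$k) * (\<Sum>l\<in>UNIV. Re (Q$l$k) * Re (Y$i$l) - Im (P$l$k) * Im (Y$i$l))
        = (\<Sum>l\<in>UNIV. Re (d$k) * (Re (P$l$k) * Im (Y$i$l) + Im (Q$l$k) * Re (Y$i$l))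
        + Im (d$k) * (Re (Q$l$k) * Re (Y$i$l) - Im (P$l$k) * Im (Y$i$l)))"
      by (simp only: sum_distrib_left sum.distrib[symmetric])
    also have "\<dots> = (\<Sum>l\<in>UNIV. ?T l k)"
      by (rule sum.cong[OF refl]) algebra
    finally show "Re (d$k) * SS Y P Q i k + Im (d$k) * CC Y Q P i k
      = Re (d$k) * Im (mat 1 $ i $ k) + Im (d$k) * Re (mat 1 $ i $ k) - (\<Sum>l\<in>UNIV. ?T l k)"
      unfolding CC_def SS_def ring2 by simp
  qed
  also have "\<dots> = 0 + Im (d$i) - (\<Sum>k\<in>UNIV. \<Sum>l\<in>UNIV. ?T l k)"
    by (simp only: sum_subtractf sum.distrib sum_delta_mat)
  also have "\<dots> = Im (d$i) - (\<Sum>l\<in>UNIV. \<Sum>k\<in>UNIV. ?T l k)"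
    unfolding sum.swap[of ?T UNIV UNIV] by simp
  finally show ?thesis using L by simp
qed

lemma mvt_mats:
  assumes "real_poly_system F" "is_enclosure_JF F JI" "icvec_ok I" "p \<in> ibox I" "z \<in> ibox I"
  obtains P Q where "P \<in> imat_members (JI I)" "Q \<in> imat_members (JI I)"
    "\<And>l. Re ((F z - F p)$l) = Re (\<Sum>k\<in>UNIV. P$l$k * (z - p)$k)"
    "\<And>l. Im ((F z - F p)$l) = Im (\<Sum>k\<in>UNIV. Q$l$k * (z - p)$k)"
proof -
  have "\<forall>l. \<exists>\<xi>. \<xi> \<in> ibox I \<and> Re (F z $ l - F p $ l) = Re (\<Sum>k\<in>UNIV. jac F \<xi> $ l $ k * (z - p) $ k)"
    using mvt_Re[OF assms(1,3-5)] by blast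
  then obtain \<xi> where \<xi>: "\<And>l. \<xi> l \<in> ibox I" "\<And>l. Re (F z $ l - F p $ l) = Re (\<Sum>k\<in>UNIV. jac F (\<xi> l) $ l $ k * (z - p) $ k)"
    by metis
  have "\<forall>l. \<exists>\<eta>. \<eta> \<in> ibox I \<and> Im (F z $ l - F p $ l) = Im (\<Sum>k\<in>UNIV. jac F \<eta> $ l $ k * (z - p) $ k)"
    using mvt_Im[OF assms(1,3-5)] by blast
  then obtain \<eta> where \<eta>: "\<And>l. \<eta> l \<in> ibox I" "\<And>l. Im (F z $ l - F p $ l) = Im (\<Sum>k\<in>UNIV. jac F (\<eta> l) $ l $ k * (z - p) $ k)"
    by metis
  have mem: "w \<in> ibox I \<Longrightarrow> jac F w \<in> imat_members (JI I)" for w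
    using assms(2,3) unfolding is_enclosure_JF_def by blast
  show ?thesis
  proof (rule that[of "\<chi> l k. jac F (\<xi> l) $ l $ k" "\<chi> l k. jac F (\<eta> l) $ l $ k"])
    show "(\<chi> l k. jac F (\<xi> l) $ l $ k) \<in> imat_members (JI I)"
      using mem[OF \<xi>(1)] unfolding members_iff by simp
    show "(\<chi> l k. jac F (\<eta> l) $ l $ k) \<in> imat_members (JI I)"
      using mem[OF \<eta>(1)] unfolding members_iff by simp
  qed (use \<xi>(2) \<eta>(2) in simp_all)
qed

lemma is_ir_single: "is_ir {r}"
  unfolding is_ir_def by (rule exI[of _ r], rule exI[of _ r]) simp

lemma ptvec_ok: "icvec_ok (pt_vec x)"
  unfolding icvec_ok_def is_ic_def pt_vec_def ic_pt_def by (simp add: is_ir_single)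

lemma in_ptvec: "x \<in> ibox (pt_vec x)"
  unfolding ibox_def pt_vec_def by (simp add: ic_ptI)

lemma g_in_K:
  assumes rp: "real_poly_system F" and eF: "is_enclosure_F F FI" and eJ: "is_enclosure_JF F JI"
    and ok: "icvec_ok I" and x: "x \<in> ibox I" and z: "z \<in> ibox I"
  shows "z - Y *v F z \<in> ibox (krawczyk FI JI x Y I)"
proof -
  obtain P Q where PQ: "P \<in> imat_members (JI I)" "Q \<in> imat_members (JI I)"
    "\<And>l. Re ((F z - F x)$l) = Re (\<Sum>k\<in>UNIV. P$l$k * (z - x)$k)"
    "\<And>l. Im ((F z - F x)$l) = Im (\<Sum>k\<in>UNIV. Q$l$k * (z - x)$k)"
    using mvt_mats[OF rp eJ ok x z] by blast
  have Fx: "F x $ j \<in> ic_set (FI (pt_vec x) j)" for j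
    using eF ptvec_ok in_ptvec unfolding is_enclosure_F_def ibox_def by blast
  show ?thesis unfolding ibox_def
  proof (intro CollectI allI)
    fix i
    have split: "(z - Y *v F z) $ i = (x $ i - (Y *v F x) $ i) + ((z - x) $ i - (Y *v (F z - F x)) $ i)"
      by (simp add: matrix_vector_mult_diff_distrib)
    have p1: "x $ i - (Y *v F x) $ i \<in> ic_set (ic_sub (pt_vec x i) (mat_vec (pt_mat Y) (FI (pt_vec x)) i))"
      unfolding pt_vec_def by (intro ic_subI ic_ptI mat_vecI) (auto simp: pt_mat_def ic_ptI Fx[unfolded pt_vec_def])
    have dk: "Re (z $ k) - Re (x $ k) \<in> fst (vec_sub I (pt_vec x) k)" "Im (z $ k) - Im (x $ k) \<in> snd (vec_sub I (pt_vec x) k)" for k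
      using z unfolding ibox_iff vec_sub_def ic_sub_def pt_vec_def ic_pt_def by (auto intro!: ir_subI)
    have fst_mv: "fst (mat_vec A J i) = ir_sum (\<lambda>k. ir_sub (ir_mul (fst (J k)) (fst (A i k))) (ir_mul (snd (J k)) (snd (A i k)))) UNIV"
      for A J unfolding mat_vec_def ic_sum_def ic_mul_def by simp
    have snd_mv: "snd (mat_vec A J i) = ir_sum (\<lambda>k. ir_add (ir_mul (fst (J k)) (snd (A i k))) (ir_mul (snd (J k)) (fst (A i k)))) UNIV"
      for A J unfolding mat_vec_def ic_sum_def ic_mul_def by simp
    have p2: "(z - x) $ i - (Y *v (F z - F x)) $ i \<in> ic_set (mat_vec (kmat JI Y I) (vec_sub I (pt_vec x)) i)"
      unfolding ic_set_iff fst_mv snd_mv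
      unfolding ident_Re[OF PQ(3,4)] ident_Im[OF PQ(3,4)]
      by (auto intro!: ir_sumI ir_subI ir_addI ir_mulI dk CC_mem SS_mem PQ(1,2))
    show "(z - Y *v F z) $ i \<in> ic_set (krawczyk FI JI x Y I i)"
      unfolding split krawczyk_def vec_add_def vec_sub_def
      by (intro ic_addI p1 p2[unfolded vec_sub_def])
  qed
qed

definition bnd :: "real set \<Rightarrow> bool" where "bnd X \<longleftrightarrow> (\<exists>M. \<forall>x\<in>X. \<bar>x\<bar> \<le> M)"
definition bndc :: "ic \<Rightarrow> bool" where "bndc A \<longleftrightarrow> bnd (fst A) \<and> bnd (snd A)"

lemma bnd_ir: "is_ir X \<Longrightarrow> bnd X"
proof -
  assume "is_ir X"
  then obtain a b where X: "X = {a..b}" unfolding is_ir_def by blast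
  show "bnd X" unfolding bnd_def X by (intro exI[of _ "\<bar>a\<bar> + \<bar>b\<bar>"]) auto
qed

lemma bnd_single: "bnd {r}" unfolding bnd_def by auto

lemma bnd_add: "bnd X \<Longrightarrow> bnd Y \<Longrightarrow> bnd (ir_add X Y)"
  unfolding bnd_def ir_add_def
proof (elim exE)
  fix M N assume "\<forall>x\<in>X. \<bar>x\<bar> \<le> M" "\<forall>x\<in>Y. \<bar>x\<bar> \<le> N"
  then show "\<exists>M. \<forall>x\<in>{x + y |x y. x \<in> X \<and> y \<in> Y}. \<bar>x\<bar> \<le> M"
    by (intro exI[of _ "M + N"]) (force intro: order_trans[OF abs_triangle_ineq] add_mono)
qed

lemma bnd_sub: "bnd X \<Longrightarrow> bnd Y \<Longrightarrow> bnd (ir_sub X Y)"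
  unfolding bnd_def ir_sub_def
proof (elim exE)
  fix M N assume "\<forall>x\<in>X. \<bar>x\<bar> \<le> M" "\<forall>x\<in>Y. \<bar>x\<bar> \<le> N"
  then show "\<exists>M. \<forall>x\<in>{x - y |x y. x \<in> X \<and> y \<in> Y}. \<bar>x\<bar> \<le> M"
    by (intro exI[of _ "M + N"]) (force intro: order_trans[OF abs_triangle_ineq4] add_mono)
qed

lemma bnd_mul: "bnd X \<Longrightarrow> bnd Y \<Longrightarrow> bnd (ir_mul X Y)"
  unfolding bnd_def ir_mul_def
proof (elim exE)
  fix M N assume M: "\<forall>x\<in>X. \<bar>x\<bar> \<le> M" and N: "\<forall>x\<in>Y. \<bar>x\<bar> \<le> N"
  show "\<exists>M. \<forall>x\<in>{x * y |x y. x \<in> X \<and> y \<in> Y}. \<bar>x\<bar> \<le> M"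
  proof (intro exI[of _ "M * N"] ballI)
    fix r assume "r \<in> {x * y |x y. x \<in> X \<and> y \<in> Y}"
    then obtain a b where "r = a * b" "a \<in> X" "b \<in> Y" by blast
    then show "\<bar>r\<bar> \<le> M * N" using M N by (simp add: abs_mult mult_mono')
  qed
qed

lemma bnd_sum: "finite J \<Longrightarrow> (\<And>j. j \<in> J \<Longrightarrow> bnd (X j)) \<Longrightarrow> bnd (ir_sum X J)"
proof -
  assume J: "finite J" and b: "\<And>j. j \<in> J \<Longrightarrow> bnd (X j)"
  then have "\<forall>j\<in>J. \<exists>M. \<forall>x\<in>X j. \<bar>x\<bar> \<le> M" unfolding bnd_def by blast
  then obtain M where M: "\<And>j x. j \<in> J \<Longrightarrow> x \<in> X j \<Longrightarrow> \<bar>x\<bar> \<le> M j" by metis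
  show "bnd (ir_sum X J)" unfolding bnd_def ir_sum_def
  proof (intro exI[of _ "\<Sum>j\<in>J. M j"] ballI)
    fix r assume "r \<in> {\<Sum>j\<in>J. x j |x. \<forall>j\<in>J. x j \<in> X j}"
    then obtain x where "r = (\<Sum>j\<in>J. x j)" "\<forall>j\<in>J. x j \<in> X j" by blast
    then show "\<bar>r\<bar> \<le> (\<Sum>j\<in>J. M j)"
      using M by (auto intro!: order_trans[OF sum_abs] sum_mono)
  qed
qed

lemma bndc_add: "bndc A \<Longrightarrow> bndc B \<Longrightarrow> bndc (ic_add A B)"
  unfolding bndc_def ic_add_def by (simp add: bnd_add)
lemma bndc_sub: "bndc A \<Longrightarrow> bndc B \<Longrightarrow> bndc (ic_sub A B)"
  unfolding bndc_def ic_sub_def by (simp add: bnd_sub)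
lemma bndc_mul: "bndc A \<Longrightarrow> bndc B \<Longrightarrow> bndc (ic_mul A B)"
  unfolding bndc_def ic_mul_def by (simp add: bnd_sub bnd_add bnd_mul)
lemma bndc_sum: "finite J \<Longrightarrow> (\<And>j. j \<in> J \<Longrightarrow> bndc (X j)) \<Longrightarrow> bndc (ic_sum X J)"
  unfolding bndc_def ic_sum_def by (simp add: bnd_sum)
lemma bndc_pt: "bndc (ic_pt z)"
  unfolding bndc_def ic_pt_def by (simp add: bnd_single)
lemma bndc_ic: "is_ic A \<Longrightarrow> bndc A"
  unfolding bndc_def is_ic_def by (simp add: bnd_ir)

lemma bndc_cmod: "bndc A \<Longrightarrow> \<exists>M\<ge>0. \<forall>b\<in>ic_set A. cmod b \<le> M"
proof -
  assume "bndc A"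
  then obtain M N where M: "\<forall>x\<in>fst A. \<bar>x\<bar> \<le> M" and N: "\<forall>x\<in>snd A. \<bar>x\<bar> \<le> N"
    unfolding bndc_def bnd_def by blast
  show ?thesis
  proof (intro exI[of _ "max 0 (M + N)"] conjI ballI)
    fix b assume "b \<in> ic_set A"
    then have "\<bar>Re b\<bar> \<le> M" "\<bar>Im b\<bar> \<le> N" using M N unfolding ic_set_iff by auto
    then show "cmod b \<le> max 0 (M + N)" using cmod_le[of b] by linarith
  qed simp
qed

lemma kmat_bndc:
  assumes "icmat_ok (JI I)"
  shows "bndc (kmat JI Y I i k)"
proof -
  have "bndc (JI I j k)" for j using assms unfolding icmat_ok_def by (simp add: bndc_ic)
  then show ?thesis
    unfolding kmat_def mat_sub_def mat_mat_def mat_vec_def pt_mat_def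
    by (intro bndc_sub bndc_pt bndc_sum bndc_mul) auto
qed

lemma vn_ge: "cmod (v $ k) \<le> vnorm_inf v"
  unfolding vnorm_inf_def by (rule Max_ge) auto

lemma vn_le: "(\<And>k. cmod (v $ k) \<le> c) \<Longrightarrow> vnorm_inf v \<le> c"
  unfolding vnorm_inf_def by (subst Max_le_iff) auto

lemma vn_pos: "v \<noteq> 0 \<Longrightarrow> vnorm_inf v > 0"
proof -
  assume "v \<noteq> 0"
  then obtain k where "v $ k \<noteq> 0" by (auto simp: vec_eq_iff)
  then have "cmod (v $ k) > 0" by simp
  then show ?thesis using vn_ge[of v k] by linarith
qed

lemma imat_bdd:
  assumes "icmat_ok (JI I)"
  shows "bdd_above {vnorm_inf (B *v v) / vnorm_inf v | B v. B \<in> imat_members (kmat JI Y I) \<and> v \<noteq> 0}"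
proof -
  have "\<forall>i k. \<exists>M\<ge>0. \<forall>b\<in>ic_set (kmat JI Y I i k). cmod b \<le> M"
    using bndc_cmod kmat_bndc[where JI=JI and I=I, OF assms] by blast
  then obtain M where M: "\<And>i k. M i k \<ge> 0" "\<And>i k b. b \<in> ic_set (kmat JI Y I i k) \<Longrightarrow> cmod b \<le> M i k"
    by metis
  let ?R = "\<Sum>i\<in>UNIV. \<Sum>k\<in>UNIV. M i k"
  show ?thesis unfolding bdd_above_def
  proof (intro exI[of _ ?R] ballI)
    fix r assume "r \<in> {vnorm_inf (B *v v) / vnorm_inf v | B v. B \<in> imat_members (kmat JI Y I) \<and> v \<noteq> 0}"
    then obtain B v where r: "r = vnorm_inf (B *v v) / vnorm_inf v" and B: "B \<in> imat_members (kmat JI Y I)" and v: "v \<noteq> 0"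
      by blast
    have vp: "vnorm_inf v > 0" using vn_pos[OF v] .
    have "cmod ((B *v v) $ i) \<le> ?R * vnorm_inf v" for i
    proof -
      have "cmod ((B *v v) $ i) \<le> (\<Sum>k\<in>UNIV. cmod (B $ i $ k * v $ k))"
        unfolding matrix_vector_mult_def by (simp add: norm_sum)
      also have "\<dots> \<le> (\<Sum>k\<in>UNIV. M i k * vnorm_inf v)"
      proof (rule sum_mono)
        fix k
        have "B $ i $ k \<in> ic_set (kmat JI Y I i k)" using B unfolding imat_members_def by blast
        then have "cmod (B $ i $ k) \<le> M i k" by (rule M(2))
        then show "cmod (B $ i $ k * v $ k) \<le> M i k * vnorm_inf v"
          unfolding norm_mult by (intro mult_mono vn_ge) (auto simp: M(1))
      qed
      also have "\<dots> = (\<Sum>k\<in>UNIV. M i k) * vnorm_inf v" by (simp add: sum_distrib_right)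
      also have "\<dots> \<le> ?R * vnorm_inf v"
        using vp by (intro mult_right_mono member_le_sum) (auto intro: sum_nonneg M(1))
      finally show ?thesis .
    qed
    then have "vnorm_inf (B *v v) \<le> ?R * vnorm_inf v" by (rule vn_le)
    then show "r \<le> ?R" unfolding r using vp by (simp add: divide_le_eq)
  qed
qed

lemma row_bound:
  assumes eJ: "is_enclosure_JF F JI" and ok: "icvec_ok I" and x: "x \<in> ibox I"
    and nrm: "sqrt 2 * imat_norm (kmat JI Y I) < 1"
    and b: "\<And>k. b k \<in> ic_set (kmat JI Y I i k)"
  shows "sqrt 2 * (\<Sum>k\<in>UNIV. cmod (b k)) < 1"
proof -
  let ?P = "jac F x"
  have P: "?P \<in> imat_members (JI I)" and icm: "icmat_ok (JI I)"
    using eJ ok x unfolding is_enclosure_JF_def by blast+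
  let ?B0 = "mat 1 - Y ** ?P"
  have B0: "?B0 $ i' $ k \<in> ic_set (kmat JI Y I i' k)" for i' k
  proof -
    have "Re (?B0 $ i' $ k) = CC Y ?P ?P i' k" "Im (?B0 $ i' $ k) = SS Y ?P ?P i' k"
      by (simp_all add: CC_def SS_def matrix_matrix_mult_def Re_sum Im_sum mult.commute add.commute)
    then show ?thesis unfolding ic_set_iff using CC_mem[where JI=JI and I=I, OF P P] SS_mem[where JI=JI and I=I, OF P P] by simp
  qed
  define B where "B = (\<chi> i' k. if i' = i then b k else ?B0 $ i' $ k)"
  have Bm: "B \<in> imat_members (kmat JI Y I)" unfolding imat_members_def B_def using b B0 by auto
  define v where "v = (\<chi> k. if b k = 0 then 1 else cnj (b k) / of_real (cmod (b k)))"
  have cv: "cmod (v $ k) = 1" for k unfolding v_def by (auto simp: norm_divide)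
  have v0: "v \<noteq> 0"
  proof
    assume "v = 0" then have "cmod (v $ i) = 0" by simp
    then show False using cv[of i] by simp
  qed
  have "range (\<lambda>k. cmod (v $ k)) = {1}" using cv by auto
  then have vn1: "vnorm_inf v = 1" unfolding vnorm_inf_def by simp
  have bv: "b k * v $ k = of_real (cmod (b k))" for k
  proof (cases "b k = 0")
    case True then show ?thesis by (simp add: v_def)
  next
    case False
    then have "b k * v $ k = (b k * cnj (b k)) / of_real (cmod (b k))" by (simp add: v_def)
    also have "\<dots> = of_real (cmod (b k) ^ 2) / of_real (cmod (b k))" by (subst complex_norm_square) (rule refl)
    also have "\<dots> = of_real (cmod (b k))" using False by (simp add: power2_eq_square)
    finally show ?thesis .
  qed
  have "(B *v v) $ i = (\<Sum>k\<in>UNIV. of_real (cmod (b k)))"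
    unfolding matrix_vector_mult_def B_def by (simp add: bv)
  also have "\<dots> = of_real (\<Sum>k\<in>UNIV. cmod (b k))" by (simp only: of_real_sum)
  finally have e: "(B *v v) $ i = of_real (\<Sum>k\<in>UNIV. cmod (b k))" .
  have "cmod ((B *v v) $ i) = (\<Sum>k\<in>UNIV. cmod (b k))"
    unfolding e norm_of_real by (simp add: sum_nonneg)
  then have "(\<Sum>k\<in>UNIV. cmod (b k)) \<le> vnorm_inf (B *v v)"
    using vn_ge[of "B *v v" i] by simp
  also have "\<dots> = vnorm_inf (B *v v) / vnorm_inf v" by (simp add: vn1)
  also have "\<dots> \<le> imat_norm (kmat JI Y I)" unfolding imat_norm_def
    by (rule cSup_upper) (use Bm v0 imat_bdd[where JI=JI and I=I and Y=Y, OF icm] in blast)+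
  finally have "sqrt 2 * (\<Sum>k\<in>UNIV. cmod (b k)) \<le> sqrt 2 * imat_norm (kmat JI Y I)"
    by (simp add: mult_left_mono)
  then show ?thesis using nrm by linarith
qed

lemma ineq2: "\<bar>a\<bar> + \<bar>b\<bar> \<le> sqrt 2 * cmod (Complex a b)"
proof -
  have "0 \<le> (\<bar>a\<bar> - \<bar>b\<bar>)^2" by simp
  then have "(\<bar>a\<bar> + \<bar>b\<bar>)^2 \<le> 2 * (a^2 + b^2)"
    by (simp add: power2_eq_square algebra_simps)
  then have "\<bar>a\<bar> + \<bar>b\<bar> \<le> sqrt (2 * (a^2 + b^2))" by (rule real_le_rsqrt)
  also have "\<dots> = sqrt 2 * cmod (Complex a b)" unfolding real_sqrt_mult cmod_def by simp
  finally show ?thesis .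
qed

lemma term_bound:
  assumes "\<bar>r\<bar> \<le> m" "\<bar>s\<bar> \<le> m"
  shows "\<bar>r * c - s * t\<bar> \<le> sqrt 2 * cmod (Complex c t) * m"
    "\<bar>r * c + s * t\<bar> \<le> sqrt 2 * cmod (Complex c t) * m"
proof -
  have m0: "0 \<le> m" using assms by linarith
  have "\<bar>r\<bar> * \<bar>c\<bar> \<le> m * \<bar>c\<bar>" "\<bar>s\<bar> * \<bar>t\<bar> \<le> m * \<bar>t\<bar>"
    using assms by (auto intro: mult_right_mono)
  moreover have "(\<bar>c\<bar> + \<bar>t\<bar>) * m \<le> sqrt 2 * cmod (Complex c t) * m"
    using ineq2[of c t] m0 by (rule mult_right_mono)
  moreover have "\<bar>r * c - s * t\<bar> \<le> \<bar>r\<bar> * \<bar>c\<bar> + \<bar>s\<bar> * \<bar>t\<bar>"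
    by (metis abs_mult abs_triangle_ineq4)
  moreover have "\<bar>r * c + s * t\<bar> \<le> \<bar>r\<bar> * \<bar>c\<bar> + \<bar>s\<bar> * \<bar>t\<bar>"
    by (metis abs_mult abs_triangle_ineq)
  ultimately show "\<bar>r * c - s * t\<bar> \<le> sqrt 2 * cmod (Complex c t) * m"
    "\<bar>r * c + s * t\<bar> \<le> sqrt 2 * cmod (Complex c t) * m"
    by (simp_all add: algebra_simps)
qed

lemma uniq:
  assumes rp: "real_poly_system F" and eJ: "is_enclosure_JF F JI" and ok: "icvec_ok I"
    and x: "x \<in> ibox I" and nrm: "sqrt 2 * imat_norm (kmat JI Y I) < 1"
    and z: "z \<in> ibox I" and w: "w \<in> ibox I" and eq: "F z = F w"
  shows "z = w"
proof -
  note row = row_bound[OF eJ ok x nrm]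
  obtain P Q where PQ: "P \<in> imat_members (JI I)" "Q \<in> imat_members (JI I)"
    "\<And>l. Re ((F z - F w)$l) = Re (\<Sum>k\<in>UNIV. P$l$k * (z - w)$k)"
    "\<And>l. Im ((F z - F w)$l) = Im (\<Sum>k\<in>UNIV. Q$l$k * (z - w)$k)"
    using mvt_mats[OF rp eJ ok w z] by blast
  define d where "d = z - w"
  have eRe: "Re (d$i) = (\<Sum>k\<in>UNIV. Re (d$k) * CC Y P Q i k - Im (d$k) * SS Y Q P i k)" for i
    using ident_Re[OF PQ(3,4), of i Y] eq unfolding d_def by simp
  have eIm: "Im (d$i) = (\<Sum>k\<in>UNIV. Re (d$k) * SS Y P Q i k + Im (d$k) * CC Y Q P i k)" for i
    using ident_Im[OF PQ(3,4), of i Y] eq unfolding d_def by simp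
  define m where "m = Max (range (\<lambda>k. max \<bar>Re (d$k)\<bar> \<bar>Im (d$k)\<bar>))"
  have mge: "\<bar>Re (d$k)\<bar> \<le> m" "\<bar>Im (d$k)\<bar> \<le> m" for k
  proof -
    have "max \<bar>Re (d$k)\<bar> \<bar>Im (d$k)\<bar> \<le> m" unfolding m_def by (rule Max_ge) auto
    then show "\<bar>Re (d$k)\<bar> \<le> m" "\<bar>Im (d$k)\<bar> \<le> m" by linarith+
  qed
  have lt: "\<bar>Re (d$i)\<bar> < m \<and> \<bar>Im (d$i)\<bar> < m" if mpos: "m > 0" for i
  proof
    let ?b = "\<lambda>k. Complex (CC Y P Q i k) (SS Y Q P i k)"
    have bm: "?b k \<in> ic_set (kmat JI Y I i k)" for k
      unfolding ic_set_iff using CC_mem[where JI=JI and I=I, OF PQ(1,2)] SS_mem[where JI=JI and I=I, OF PQ(2,1)] by simp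
    have "\<bar>Re (d$i)\<bar> \<le> (\<Sum>k\<in>UNIV. \<bar>Re (d$k) * CC Y P Q i k - Im (d$k) * SS Y Q P i k\<bar>)"
      unfolding eRe[of i] by (rule sum_abs)
    also have "\<dots> \<le> (\<Sum>k\<in>UNIV. sqrt 2 * cmod (?b k) * m)"
      by (rule sum_mono) (rule term_bound(1)[OF mge])
    also have "\<dots> = sqrt 2 * (\<Sum>k\<in>UNIV. cmod (?b k)) * m"
      by (simp add: sum_distrib_left sum_distrib_right)
    also have "\<dots> < 1 * m" using row[OF bm] mpos by (intro mult_strict_right_mono) auto
    finally show "\<bar>Re (d$i)\<bar> < m" by simp
  next
    let ?b = "\<lambda>k. Complex (CC Y Q P i k) (SS Y P Q i k)"
    have bm: "?b k \<in> ic_set (kmat JI Y I i k)" for k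
      unfolding ic_set_iff using CC_mem[where JI=JI and I=I, OF PQ(2,1)] SS_mem[where JI=JI and I=I, OF PQ(1,2)] by simp
    have "\<bar>Im (d$i)\<bar> \<le> (\<Sum>k\<in>UNIV. \<bar>Im (d$k) * CC Y Q P i k + Re (d$k) * SS Y P Q i k\<bar>)"
      unfolding eIm[of i] by (simp add: add.commute sum_abs)
    also have "\<dots> \<le> (\<Sum>k\<in>UNIV. sqrt 2 * cmod (?b k) * m)"
      by (rule sum_mono) (rule term_bound(2)[OF mge(2,1)])
    also have "\<dots> = sqrt 2 * (\<Sum>k\<in>UNIV. cmod (?b k)) * m"
      by (simp add: sum_distrib_left sum_distrib_right)
    also have "\<dots> < 1 * m" using row[OF bm] mpos by (intro mult_strict_right_mono) auto
    finally show "\<bar>Im (d$i)\<bar> < m" by simp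
  qed
  have "m \<in> range (\<lambda>k. max \<bar>Re (d$k)\<bar> \<bar>Im (d$k)\<bar>)" unfolding m_def by (rule Max_in) auto
  then obtain k0 where k0: "m = max \<bar>Re (d$k0)\<bar> \<bar>Im (d$k0)\<bar>" by blast
  have "\<not> m > 0" using lt[of k0] k0 by linarith
  then have "d $ k = 0" for k
  proof -
    have "Re (d$k) = 0" "Im (d$k) = 0" using mge[of k] \<open>\<not> m > 0\<close> by linarith+
    then show ?thesis by (simp add: complex_eq_iff)
  qed
  then have "d = 0" by (simp add: vec_eq_iff)
  then show ?thesis unfolding d_def by simp
qed

lemma box_convex: fixes I :: "'n::finite \<Rightarrow> ic" assumes ok: "icvec_ok I" shows "convex (ibox I)"
proof (rule convexI)
  fix z w :: "complex^'n" and u v :: real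
  assume z: "z \<in> ibox I" and w: "w \<in> ibox I" and u: "0 \<le> u" and v: "0 \<le> v" and uv: "u + v = 1"
  show "u *\<^sub>R z + v *\<^sub>R w \<in> ibox I" unfolding ibox_iff
  proof
    fix k
    have oks: "is_ir (fst (I k))" "is_ir (snd (I k))" using ok unfolding icvec_ok_def is_ic_def by auto
    have eqs: "Re ((u *\<^sub>R z + v *\<^sub>R w) $ k) = Re (z$k) + v * (Re (w$k) - Re (z$k))"
         "Im ((u *\<^sub>R z + v *\<^sub>R w) $ k) = Im (z$k) + v * (Im (w$k) - Im (z$k))"
    proof -
      have u1: "u = 1 - v" using uv by simp
      show "Re ((u *\<^sub>R z + v *\<^sub>R w) $ k) = Re (z$k) + v * (Re (w$k) - Re (z$k))"
           "Im ((u *\<^sub>R z + v *\<^sub>R w) $ k) = Im (z$k) + v * (Im (w$k) - Im (z$k))"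
        unfolding u1 by (simp_all add: algebra_simps)
    qed
    then show "Re ((u *\<^sub>R z + v *\<^sub>R w) $ k) \<in> fst (I k) \<and> Im ((u *\<^sub>R z + v *\<^sub>R w) $ k) \<in> snd (I k)" (is ?thesis2)
    proof -
      have v1: "v \<le> 1" using u uv by linarith
      show ?thesis2 unfolding eqs using is_ir_convex[OF oks(1) _ _ v v1] is_ir_convex[OF oks(2) _ _ v v1] z w
        unfolding ibox_iff by auto
    qed
  qed
qed

lemma box_compact: fixes I :: "'n::finite \<Rightarrow> ic" assumes ok: "icvec_ok I" shows "compact (ibox I)"
proof -
  have "\<forall>k. \<exists>a b c e. fst (I k) = {a..b} \<and> snd (I k) = {c..e}"
    using ok unfolding icvec_ok_def is_ic_def is_ir_def by blast
  then obtain a b c e where abce: "\<And>k. fst (I k) = {a k..b k}" "\<And>k. snd (I k) = {c k..e k}" by metis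
  have eq: "ibox I = {z. \<forall>k. (a k \<le> Re (z$k) \<and> Re (z$k) \<le> b k) \<and> (c k \<le> Im (z$k) \<and> Im (z$k) \<le> e k)}"
    by (auto simp: ibox_iff abce)
  have cl: "closed (ibox I)" unfolding eq
    by (intro closed_Collect_all closed_Collect_conj closed_Collect_le continuous_intros)
  have "\<forall>k. \<exists>M\<ge>0. \<forall>b\<in>ic_set (I k). cmod b \<le> M"
    using ok unfolding icvec_ok_def by (blast intro: bndc_cmod bndc_ic)
  then obtain M where M: "\<And>k z. z \<in> ic_set (I k) \<Longrightarrow> cmod z \<le> M k" by metis
  have bd: "bounded (ibox I)" unfolding bounded_iff
  proof (intro exI[of _ "\<Sum>k\<in>UNIV. M k"] ballI)
    fix z assume "z \<in> ibox I"
    then have "cmod (z$k) \<le> M k" for k using M unfolding ibox_def by blast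
    then have "(\<Sum>k\<in>UNIV. cmod (z$k)) \<le> (\<Sum>k\<in>UNIV. M k)" by (rule sum_mono)
    moreover have "norm z \<le> (\<Sum>k\<in>UNIV. cmod (z$k))"
      unfolding norm_vec_def by (rule L2_set_le_sum) simp
    ultimately show "norm z \<le> (\<Sum>k\<in>UNIV. M k)" by linarith
  qed
  show ?thesis using cl bd by (simp add: compact_eq_bounded_closed)
qed

lemma F_form:
  assumes "real_poly_system F"
  obtains A c where "\<And>i. finite (A i)"
    "\<And>z i. F z $ i = (\<Sum>\<alpha>\<in>A i. of_real (c i \<alpha>) * (\<Prod>k\<in>UNIV. (z $ k) ^ (\<alpha> k)))"
proof -
  have "\<forall>i. \<exists>A c. finite A \<and> (\<forall>z. F z $ i = (\<Sum>\<alpha>\<in>A. of_real (c \<alpha>) * (\<Prod>k\<in>UNIV. (z $ k) ^ (\<alpha> k))))"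
    using assms unfolding real_poly_system_def by blast
  then obtain A c where "\<And>i. finite (A i) \<and> (\<forall>z. F z $ i = (\<Sum>\<alpha>\<in>A i. of_real (c i \<alpha>) * (\<Prod>k\<in>UNIV. (z $ k) ^ (\<alpha> k))))"
    by metis
  then show ?thesis using that by blast
qed

lemma F_cont:
  assumes "real_poly_system F"
  shows "continuous_on S F"
proof -
  obtain A c where Ac: "\<And>z i. F z $ i = (\<Sum>\<alpha>\<in>A i. of_real (c i \<alpha>) * (\<Prod>k\<in>UNIV. (z $ k) ^ (\<alpha> k)))"
    using F_form[OF assms] by metis
  have "F = (\<lambda>z. \<chi> i. (\<Sum>\<alpha>\<in>A i. of_real (c i \<alpha>) * (\<Prod>k\<in>UNIV. (z $ k) ^ (\<alpha> k))))"
    by (auto simp: vec_eq_iff Ac)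
  then show ?thesis by (simp add: continuous_intros)
qed

lemma F_cnj:
  assumes "real_poly_system F"
  shows "F (vcnj z) = vcnj (F z)"
proof -
  obtain A c where Ac: "\<And>z i. F z $ i = (\<Sum>\<alpha>\<in>A i. of_real (c i \<alpha>) * (\<Prod>k\<in>UNIV. (z $ k) ^ (\<alpha> k)))"
    using F_form[OF assms] by metis
  show ?thesis by (simp add: vec_eq_iff Ac vcnj_def)
qed

theorem corollary4p12:
  fixes F :: "complex^'n::finite \<Rightarrow> complex^'n"
    and FI :: "('n \<Rightarrow> ic) \<Rightarrow> ('n \<Rightarrow> ic)"
    and JI :: "('n \<Rightarrow> ic) \<Rightarrow> ('n \<Rightarrow> 'n \<Rightarrow> ic)"
    and I :: "'n \<Rightarrow> ic"
  assumes "real_poly_system F"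
    and "is_enclosure_F F FI"
    and "is_enclosure_JF F JI"
    and "icvec_ok I"
    and "strong_iaz FI JI I"
    and "\<exists>x Y. x \<in> ibox I \<and> invertible Y \<and> ibox (krawczyk FI JI x Y I) \<subseteq> ibox I \<and>
            sqrt 2 * imat_norm (kmat JI Y I) < 1 \<and>
            vcnj ` ibox (krawczyk FI JI x Y I) \<subseteq> ibox I"
    and "\<forall>k. \<forall>r\<in>fst (I k). r > 0"
  shows "\<exists>z\<in>ibox I. F z = 0 \<and> (\<forall>w\<in>ibox I. F w = 0 \<longrightarrow> w = z) \<and>
           (\<forall>k. Im (z $ k) = 0 \<and> Re (z $ k) > 0)"
proof -
  note rp = assms(1) and eF = assms(2) and eJ = assms(3) and ok = assms(4)
  obtain x Y where x: "x \<in> ibox I" and Yinv: "invertible Y"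
    and KI: "ibox (krawczyk FI JI x Y I) \<subseteq> ibox I"
    and nrm: "sqrt 2 * imat_norm (kmat JI Y I) < 1"
    and cK: "vcnj ` ibox (krawczyk FI JI x Y I) \<subseteq> ibox I"
    using assms(6) by blast
  define g where "g = (\<lambda>z. z - Y *v F z)"
  have gK: "z \<in> ibox I \<Longrightarrow> g z \<in> ibox (krawczyk FI JI x Y I)" for z
    unfolding g_def by (rule g_in_K[OF rp eF eJ ok x])
  have cont: "continuous_on (ibox I) g"
  proof -
    have "continuous_on (ibox I) (\<lambda>z. Y *v F z)"
      by (rule continuous_on_compose2[OF matrix_vector_mult_linear_continuous_on[of UNIV Y] F_cont[OF rp]]) auto
    then show ?thesis unfolding g_def by (rule continuous_on_diff[OF continuous_on_id])
  qed
  have fim: "g \<in> ibox I \<rightarrow> ibox I" using gK KI by blast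
  have ne: "ibox I \<noteq> {}" using x by blast
  obtain z where z: "z \<in> ibox I" and gz: "g z = z"
    using brouwer[OF box_compact[OF ok] box_convex[OF ok] ne cont fim] by blast
  have "Y *v F z = Y *v 0" using gz unfolding g_def by simp
  then have Fz: "F z = 0" by (rule injD[OF inj_matrix_vector_mult[OF Yinv]])
  have un: "\<forall>w\<in>ibox I. F w = 0 \<longrightarrow> w = z"
  proof (intro ballI impI)
    fix w assume w: "w \<in> ibox I" and "F w = 0"
    then have "F w = F z" using Fz by simp
    then show "w = z" by (rule uniq[OF rp eJ ok x nrm w z])
  qed
  have "vcnj (g z) \<in> vcnj ` ibox (krawczyk FI JI x Y I)" using gK[OF z] by (rule imageI)
  then have cz: "vcnj z \<in> ibox I" using cK gz by auto
  have v0: "vcnj (0::complex^'n) = 0" by (simp add: vcnj_def vec_eq_iff)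
  have "F (vcnj z) = 0" unfolding F_cnj[OF rp, of z] Fz v0 ..
  then have "vcnj z = z" using un cz by blast
  then have "cnj (z $ k) = z $ k" for k by (metis vcnj_def vec_lambda_beta)
  then have "Im (cnj (z $ k)) = Im (z $ k)" for k by simp
  then have im: "Im (z $ k) = 0" for k using \<open>\<And>k. Im (cnj (z $ k)) = Im (z $ k)\<close>[of k] by simp
  have re: "Re (z $ k) > 0" for k using z assms(7) unfolding ibox_iff by blast
  show ?thesis using z Fz un im re by blast
qed

end
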